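(* Assume the setting below, with $\mathbb{E}A^\alpha=1$ for some $\alpha>1$, $\mathbb{P}[A=1]<1$, $\mathbb{E}A^{\alpha+\delta}<\infty$ for some $\delta>0$, and the law of $\log A$ nonarithmetic. Then there are constants $C,\delta'>0$ such that for all sufficiently large $x$, $$\mathbb{P}\Big(\sum_{j=1}^{n_1}\widetilde Z^j_{j,j+n_1}>x\Big)\le e^{-C(\log x)^{\delta'}}x^{-\alpha}.$$
   Context: Environment: $\omega=(\omega_n)_{n\in\mathbb{Z}}$ i.i.d. $(0,1)$-valued with law $P$; $A_n=(1-\omega_n)/\omega_n$, $A$ a generic copy; $\Lambda(s)=\log\mathbb{E}A^s$, $\rho_0=\Lambda'(\alpha)=\mathbb{E}[A^\alpha\log A]$. Branching process: given $\omega$, for each $i\in\mathbb{Z}$ the $i$-th immigrant produces $Z_{i,i}$ children with $\mathbb{P}_\omega(Z_{i,i}=l)=\omega_{i-1}(1-\omega_{i-1})^l$; $Z_{i,n}=0$ for $n<i$; for $n\ge i$, $Z_{i,n+1}=\sum_{k=1}^{Z_{i,n}}\xi^{(i)}_{n,k}$ with all offspring variables independent under $\mathbb{P}_\omega$ and $\mathbb{P}_\omega(\xi^{(i)}_{n,k}=l)=\omega_n(1-\omega_n)^l$. $\widetilde Z^i_{k,n}=\sum_{j=k}^nZ_{i,j}$. $\mathbb{P}$ annealed law. $n_0=\lfloor\log x/\rho_0\rfloor$, $m=\lfloor(\log x)^{1/2+\sigma}\rfloor$ for a fixed small $\sigma>0$, $n_1=n_0-m$. Nonarithmetic: the law of $\log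 A$ is not concentrated on any lattice $h\mathbb{Z}$. *)

theory Defs
  imports "HOL-Probability.Probability"
begin

text \<open>Offspring law with parameter p: P(l) = p (1-p)^l (geometric); totalised outside (0,1]
  so that it is a total function of the environment value.\<close>
definition geom :: "real \<Rightarrow> nat pmf" where
  "geom p = (if 0 < p \<and> p \<le> 1 then geometric_pmf p else return_pmf 0)"

fun geom_sum :: "real \<Rightarrow> nat \<Rightarrow> nat pmf" where
  "geom_sum p 0 = return_pmf 0"
| "geom_sum p (Suc k) = bind_pmf (geom p) (\<lambda>a. map_pmf (\<lambda>b. a + b) (geom_sum p k))"

text \<open>Quenched law (environment w) of the pair (Z_{i,i+k}, Ztilde^i_{i,i+k}) for the
  descendants of the i-th immigrant.\<close>
fun Zpath :: "(int \<Rightarrow> real) \<Rightarrow> int \<Rightarrow> nat \<Rightarrow> (nat \<times> nat) pmf" where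
  "Zpath w i 0 = map_pmf (\<lambda>z. (z, z)) (geom (w (i - 1)))"
| "Zpath w i (Suc k) = bind_pmf (Zpath w i k)
     (\<lambda>(z, s). map_pmf (\<lambda>z'. (z', s + z')) (geom_sum (w (i + int k)) z))"

text \<open>Quenched law of  sum_{j=1}^{k} Ztilde^j_{j,j+n}; the families of different immigrants are
  independent under the quenched law.\<close>
fun Ztot :: "(int \<Rightarrow> real) \<Rightarrow> nat \<Rightarrow> nat \<Rightarrow> nat pmf" where
  "Ztot w n 0 = return_pmf 0"
| "Ztot w n (Suc k) = bind_pmf (Ztot w n k)
     (\<lambda>s. map_pmf (\<lambda>t. s + snd t) (Zpath w (int (Suc k)) n))"

definition env :: "real measure \<Rightarrow> (int \<Rightarrow> real) measure" where
  "env P = PiM UNIV (\<lambda>_. P)"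

definition annealed_tail :: "real measure \<Rightarrow> nat \<Rightarrow> nat \<Rightarrow> real \<Rightarrow> real" where
  "annealed_tail P n k x =
     (\<integral>w. measure_pmf.prob (Ztot w n k) {s. real s > x} \<partial>env P)"

definition Aof :: "real \<Rightarrow> real" where
  "Aof w = (1 - w) / w"

definition rho0 :: "real measure \<Rightarrow> real \<Rightarrow> real" where
  "rho0 P \<alpha> = (\<integral>w. Aof w powr \<alpha> * ln (Aof w) \<partial>P)"

definition n1 :: "real measure \<Rightarrow> real \<Rightarrow> real \<Rightarrow> real \<Rightarrow> int" where
  "n1 P \<alpha> \<sigma> x = \<lfloor>ln x / rho0 P \<alpha>\<rfloor> - \<lfloor>ln x powr (1/2 + \<sigma>)\<rfloor>"

end

theory Submission
  imports Defs "HOL-Real_Asymp.Real_Asymp"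
begin

definition Ap :: "real \<Rightarrow> real" where
  "Ap p = (if 0 < p \<and> p \<le> 1 then (1 - p) / p else 0)"

lemma Ap_nonneg: "Ap p \<ge> 0"
  by (auto simp: Ap_def)

lemma geom_pgf:
  assumes h: "h \<ge> 0" "Ap p * h < 1"
  shows "(\<integral>\<^sup>+a. ennreal ((1+h)^a) \<partial>geom p) = ennreal (1 / (1 - Ap p * h))"
proof (cases "0 < p \<and> p \<le> 1")
  case True
  have q0: "0 \<le> (1-p)*(1+h)" using True h by auto
  have q1: "(1-p)*(1+h) < 1"
  proof -
    have "Ap p * h * p < p" using h True by (simp add: mult_less_cancel_right1)
    hence "(1-p) * h < p" using True by (simp add: Ap_def)
    thus ?thesis by (simp add: algebra_simps)
  qed
  have "(\<integral>\<^sup>+a. ennreal ((1+h)^a) \<partial>geom p) = (\<Sum>a. ennreal (p * ((1-p)*(1+h))^a))"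
    using True h
    by (simp add: geom_def nn_integral_measure_pmf nn_integral_count_space_nat
        ennreal_mult'[symmetric] power_mult_distrib mult_ac)
  also have "\<dots> = ennreal (p * (1 / (1 - (1-p)*(1+h))))"
    by (intro suminf_ennreal_eq sums_mult geometric_sums) (use q0 q1 True in auto)
  also have "p * (1 / (1 - (1-p)*(1+h))) = 1 / (1 - Ap p * h)"
    using True q1 by (simp add: Ap_def field_simps)
  finally show ?thesis .
next
  case False
  hence "geom p = return_pmf 0" "Ap p = 0" by (auto simp: geom_def Ap_def)
  then show ?thesis by simp
qed

lemma geom_sum_pgf:
  assumes h: "h \<ge> 0" "Ap p * h < 1"
  shows "(\<integral>\<^sup>+b. ennreal ((1+h)^b) \<partial>geom_sum p z) = ennreal ((1 / (1 - Ap p * h))^z)"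
proof (induction z)
  case 0
  then show ?case by simp
next
  case (Suc z)
  have "(\<integral>\<^sup>+b. ennreal ((1+h)^b) \<partial>geom_sum p (Suc z))
      = (\<integral>\<^sup>+a. ennreal ((1+h)^a) * (\<integral>\<^sup>+b. ennreal ((1+h)^b) \<partial>geom_sum p z) \<partial>geom p)"
    using h by (simp add: power_add ennreal_mult' nn_integral_cmult)
  also have "\<dots> = (\<integral>\<^sup>+a. ennreal ((1+h)^a) \<partial>geom p) * ennreal ((1 / (1 - Ap p * h))^z)"
    by (simp add: Suc nn_integral_multc)
  also have "\<dots> = ennreal ((1 / (1 - Ap p * h))^Suc z)"
    using h by (simp add: geom_pgf ennreal_mult'[symmetric] Ap_nonneg)
  finally show ?case .
qed

definition Zfst :: "(int \<Rightarrow> real) \<Rightarrow> int \<Rightarrow> nat \<Rightarrow> nat pmf" where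
  "Zfst w i k = map_pmf fst (Zpath w i k)"

lemma Zfst_0: "Zfst w i 0 = geom (w (i - 1))"
  by (simp add: Zfst_def pmf.map_comp o_def)

lemma Zfst_Suc: "Zfst w i (Suc k) = bind_pmf (Zfst w i k) (geom_sum (w (i + int k)))"
  by (simp add: Zfst_def map_bind_pmf bind_map_pmf pmf.map_comp o_def case_prod_unfold)

definition aa :: "(int \<Rightarrow> real) \<Rightarrow> int \<Rightarrow> nat \<Rightarrow> real" where
  "aa w i l = Ap (w (i - 1 + int l))"

fun Em :: "(int \<Rightarrow> real) \<Rightarrow> int \<Rightarrow> nat \<Rightarrow> real" where
  "Em w i 0 = aa w i 0"
| "Em w i (Suc k) = aa w i (Suc k) * Em w i k"

fun Um :: "(int \<Rightarrow> real) \<Rightarrow> int \<Rightarrow> nat \<Rightarrow> real" where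
  "Um w i 0 = 1 + aa w i 0"
| "Um w i (Suc k) = 1 + aa w i (Suc k) * Um w i k"

lemma aa_nonneg: "aa w i l \<ge> 0" by (simp add: aa_def Ap_nonneg)
lemma aa_0: "aa w i 0 = Ap (w (i - 1))" by (simp add: aa_def)
lemma aa_Suc: "aa w i (Suc k) = Ap (w (i + int k))" by (simp add: aa_def)

lemma Em_nonneg: "Em w i k \<ge> 0"
  by (induction k) (auto simp: aa_nonneg)

lemma Um_ge1: "Um w i k \<ge> 1"
  by (induction k) (auto simp: aa_nonneg)

lemma Zfst_pgf:
  assumes "h \<ge> 0" "(Um w i k - 1) * h < 1"
  shows "(\<integral>\<^sup>+z. ennreal ((1+h)^z) \<partial>Zfst w i k)
       = ennreal (1 + Em w i k * h / (1 - (Um w i k - 1) * h))"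
  using assms
proof (induction k arbitrary: h)
  case 0
  have "1 + Ap (w (i - 1)) * h / (1 - Ap (w (i - 1)) * h) = 1 / (1 - Ap (w (i - 1)) * h)"
    using 0 by (simp add: aa_0 field_simps)
  then show ?case using 0 by (simp add: Zfst_0 geom_pgf aa_0)
next
  case (Suc k)
  define a where "a = aa w i (Suc k)"
  define U where "U = Um w i k"
  define E where "E = Em w i k"
  have a0: "a \<ge> 0" by (simp add: a_def aa_nonneg)
  have U1: "U \<ge> 1" by (simp add: U_def Um_ge1)
  have aUh: "a * U * h < 1" using Suc.prems by (simp add: a_def U_def mult_ac)
  have "a * h \<le> a * U * h"
  proof -
    have "a * 1 \<le> a * U" using a0 U1 by (intro mult_left_mono) auto
    thus ?thesis using Suc.prems(1) by (intro mult_right_mono) auto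
  qed
  hence ah: "a * h < 1" using aUh by linarith
  define h' where "h' = a * h / (1 - a * h)"
  have h'0: "h' \<ge> 0" using ah a0 Suc.prems(1) by (simp add: h'_def)
  have one: "1 / (1 - a * h) = 1 + h'" using ah by (simp add: h'_def field_simps)
  have cond: "(U - 1) * h' < 1"
  proof -
    have "(U - 1) * (a * h) < 1 - a * h" using aUh by (simp add: algebra_simps)
    thus ?thesis using ah by (simp add: h'_def field_simps)
  qed
  have "(\<integral>\<^sup>+z. ennreal ((1+h)^z) \<partial>Zfst w i (Suc k))
      = (\<integral>\<^sup>+z. ennreal ((1 / (1 - a * h))^z) \<partial>Zfst w i k)"
    using Suc.prems(1) ah by (simp add: Zfst_Suc geom_sum_pgf a_def aa_Suc)
  also have "\<dots> = (\<integral>\<^sup>+z. ennreal ((1+h')^z) \<partial>Zfst w i k)" by (simp add: one)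
  also have "\<dots> = ennreal (1 + E * h' / (1 - (U - 1) * h'))"
    using Suc.IH[OF h'0] cond by (simp add: E_def U_def)
  also have "1 + E * h' / (1 - (U - 1) * h') = 1 + Em w i (Suc k) * h / (1 - (Um w i (Suc k) - 1) * h)"
  proof -
    have d1: "1 - a * h \<noteq> 0" using ah by simp
    have d2: "1 - a * U * h \<noteq> 0" using aUh by simp
    have e1: "1 - (U - 1) * h' = (1 - a * U * h) / (1 - a * h)"
      using d1 by (simp add: h'_def field_simps)
    have "E * h' / (1 - (U - 1) * h') = E * h' * ((1 - a * h) / (1 - a * U * h))"
      by (simp add: e1)
    also have "\<dots> = E * (a * h / (1 - a * h)) * ((1 - a * h) / (1 - a * U * h))"
      by (simp add: h'_def)
    also have "\<dots> = E * (a * h) / (1 - a * U * h)" using d1 by simp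
    finally have "E * h' / (1 - (U - 1) * h') = E * (a * h) / (1 - a * U * h)" .
    thus ?thesis by (simp add: E_def U_def a_def mult_ac)
  qed
  finally show ?case .
qed


lemma exp_ge_pow_fact:
  fixes t :: real
  assumes "t \<ge> 0" "m \<ge> 1"
  shows "1 + t ^ m / fact m \<le> exp t"
proof -
  have e: "(\<lambda>n. t ^ n /\<^sub>R fact n) = (\<lambda>n. t ^ n / fact n)"
    by (rule ext) (simp add: divide_inverse_commute)
  have ss: "(\<lambda>n. t ^ n / fact n) sums exp t"
    using exp_converges[of t] unfolding e .
  have s: "summable (\<lambda>n. t ^ n / fact n)" using ss by (simp add: sums_iff)
  have "(\<Sum>n\<in>{0, m}. t ^ n / fact n) \<le> (\<Sum>n. t ^ n / fact n)"
    by (rule sum_le_suminf[OF s]) (use assms in auto)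
  also have "\<dots> = exp t"
    using ss by (simp add: sums_iff)
  finally show ?thesis using assms by simp
qed

lemma powr_le_fact_exp:
  fixes t \<beta> :: real
  assumes t: "t > 0" and b: "\<beta> \<ge> 1"
  shows "t powr \<beta> \<le> fact (nat \<lceil>\<beta>\<rceil>) * (exp t - 1)"
proof -
  define m where "m = nat \<lceil>\<beta>\<rceil>"
  have "real_of_int \<lceil>\<beta>\<rceil> \<ge> real_of_int 1" using le_of_int_ceiling[of \<beta>] b by linarith
  hence c1: "\<lceil>\<beta>\<rceil> \<ge> 1" by (simp only: of_int_le_iff)
  have m1: "m \<ge> 1" using nat_mono[OF c1] m_def by simp
  have "real m = real_of_int \<lceil>\<beta>\<rceil>" using c1 m_def by simp
  hence bm: "\<beta> \<le> real m" using le_of_int_ceiling[of \<beta>] by linarith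
  have F1: "(1::real) \<le> fact m" by simp
  have e0: "exp t - 1 \<ge> t" using exp_ge_add_one_self[of t] by linarith
  show ?thesis
  proof (cases "t \<le> 1")
    case True
    have "t powr \<beta> \<le> t powr 1" using True t b by (intro powr_mono') auto
    also have "\<dots> = t" using t by simp
    also have "\<dots> \<le> exp t - 1" by (rule e0)
    also have "\<dots> \<le> fact m * (exp t - 1)"
    proof -
      have "0 \<le> exp t - 1" using e0 t by linarith
      from mult_right_mono[OF F1 this] show ?thesis by simp
    qed
    finally show ?thesis by (simp add: m_def)
  next
    case False
    have "t powr \<beta> \<le> t powr real m" using False bm by (intro powr_mono) auto
    also have "\<dots> = t ^ m" using t by (simp add: powr_realpow)
    also have "\<dots> \<le> fact m * (exp t - 1)"
      using exp_ge_pow_fact[of t m] t m1 by (simp add: field_simps)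
    finally show ?thesis by (simp add: m_def)
  qed
qed

lemma ln_1p_half: assumes "0 \<le> (h::real)" "h \<le> 1" shows "h / 2 \<le> ln (1 + h)"
proof -
  have "h / 2 \<le> h / (1 + h)" using assms by (intro divide_left_mono) auto
  also have "\<dots> \<le> ln (h + 1)" using ln_add1_ge assms by simp
  finally show ?thesis by (simp add: add.commute)
qed

lemma Zfst_tail:
  fixes y \<beta> :: real
  assumes y: "y > 0" and b: "\<beta> \<ge> 1"
  shows "emeasure (Zfst w i k) {z. real z > y}
     \<le> ennreal (fact (nat \<lceil>\<beta>\<rceil>) * 4 powr \<beta> * Em w i k * Um w i k powr (\<beta> - 1) / y powr \<beta>)"
proof -
  define U where "U = Um w i k"
  define E where "E = Em w i k"
  define F where "F = (fact (nat \<lceil>\<beta>\<rceil>) :: real)"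
  define h where "h = 1 / (2 * U)"
  have U1: "U \<ge> 1" by (simp add: U_def Um_ge1)
  have E0: "E \<ge> 0" by (simp add: E_def Em_nonneg)
  have h0: "h > 0" "h \<le> 1/2" using U1 by (auto simp: h_def field_simps)
  have Uh: "(U - 1) * h \<le> 1/2" using U1 by (simp add: h_def field_simps)
  hence Uh1: "(U - 1) * h < 1" by simp
  define R where "R = E * h / (1 - (U - 1) * h)"
  have R0: "R \<ge> 0" using E0 h0 Uh by (simp add: R_def)
  have RE: "R \<le> E / U"
  proof -
    have "R \<le> E * h / (1/2)" unfolding R_def using E0 h0 Uh
      by (intro divide_left_mono) auto
    also have "\<dots> = E / U" using U1 by (simp add: h_def field_simps)
    finally show ?thesis .
  qed
  have pgf: "(\<integral>\<^sup>+z. ennreal ((1+h)^z) \<partial>Zfst w i k) = ennreal (1 + R)"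
    using Zfst_pgf[of h w i k] h0 Uh1 by (simp add: R_def U_def E_def)
  have "(\<integral>\<^sup>+z. ennreal ((1+h)^z) \<partial>Zfst w i k)
       = (\<integral>\<^sup>+z. ennreal ((1+h)^z - 1) + 1 \<partial>Zfst w i k)"
  proof (intro nn_integral_cong)
    fix z :: nat
    have "(1::real) \<le> (1+h)^z" using h0 by simp
    thus "ennreal ((1+h)^z) = ennreal ((1+h)^z - 1) + 1"
      using ennreal_plus[of "(1+h)^z - 1" 1] by simp
  qed
  also have "\<dots> = (\<integral>\<^sup>+z. ennreal ((1+h)^z - 1) \<partial>Zfst w i k) + 1"
    by (subst nn_integral_add) (auto simp: measure_pmf.emeasure_space_1)
  finally have "1 + (\<integral>\<^sup>+z. ennreal ((1+h)^z - 1) \<partial>Zfst w i k) = 1 + ennreal R"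
    using pgf R0 ennreal_plus[of 1 R] by (simp add: add.commute)
  hence int1: "(\<integral>\<^sup>+z. ennreal ((1+h)^z - 1) \<partial>Zfst w i k) = ennreal R"
    unfolding ennreal_add_left_cancel by simp
  define c where "c = (1+h) powr y - 1"
  have lnh: "h / 2 \<le> ln (1 + h)" using h0 by (intro ln_1p_half) auto
  have "exp (y * h / 2) \<le> (1+h) powr y"
  proof -
    have "y * h / 2 \<le> y * ln (1 + h)" using lnh y by (simp add: mult_left_mono)
    thus ?thesis using h0 by (simp add: powr_def)
  qed
  hence cge: "c \<ge> exp (y * h / 2) - 1" by (simp add: c_def)
  define t where "t = y * h / 2"
  have t0: "t > 0" using y h0 by (simp add: t_def)
  have tp: "t powr \<beta> \<le> F * (exp t - 1)" unfolding F_def by (rule powr_le_fact_exp[OF t0 b])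
  have tpos: "t powr \<beta> > 0" using t0 by simp
  have F0: "F > 0" by (simp add: F_def)
  have tF: "t powr \<beta> / F \<le> c"
  proof -
    have "t powr \<beta> / F \<le> exp t - 1" using tp F0 by (simp add: field_simps)
    also have "\<dots> \<le> c" using cge by (simp add: t_def)
    finally show ?thesis .
  qed
  have cpos: "c > 0"
  proof -
    have "0 < t powr \<beta> / F" using tpos F0 by simp
    also have "\<dots> \<le> exp t - 1" using tp F0 by (simp add: field_simps)
    also have "\<dots> \<le> c" using cge by (simp add: t_def)
    finally show ?thesis .
  qed
  have markov: "emeasure (Zfst w i k) {z. real z > y} * ennreal c \<le> ennreal R"
  proof -
    have "emeasure (Zfst w i k) {z. real z > y} * ennreal c
        = (\<integral>\<^sup>+z. ennreal c * indicator {z. real z > y} z \<partial>Zfst w i k)"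
      by (simp add: nn_integral_cmult_indicator mult.commute)
    also have "\<dots> \<le> (\<integral>\<^sup>+z. ennreal ((1+h)^z - 1) \<partial>Zfst w i k)"
    proof (intro nn_integral_mono)
      fix z :: nat
      show "ennreal c * indicator {z. real z > y} z \<le> ennreal ((1+h)^z - 1)"
      proof (cases "real z > y")
        case True
        have "(1+h) powr y \<le> (1+h) powr (real z)" using True h0 by (intro powr_mono) auto
        also have "\<dots> = (1+h)^z" using h0 by (simp add: powr_realpow)
        finally have "c \<le> (1+h)^z - 1" by (simp add: c_def)
        thus ?thesis using True by (simp add: ennreal_leI)
      qed simp
    qed
    finally show ?thesis using int1 by simp
  qed
  have meas: "measure (Zfst w i k) {z. real z > y} * c \<le> R"
    using markov cpos R0
    by (simp add: measure_pmf.emeasure_eq_measure ennreal_mult'[symmetric])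
  have "measure (Zfst w i k) {z. real z > y} \<le> R / c"
    using meas cpos by (simp add: field_simps)
  also have "\<dots> \<le> (E / U) / (t powr \<beta> / F)"
  proof (intro frac_le)
    show "0 \<le> E / U" using E0 U1 by simp
    show "R \<le> E / U" by (rule RE)
    show "0 < t powr \<beta> / F" using tpos F0 by simp
    show "t powr \<beta> / F \<le> c" by (rule tF)
  qed
  also have "\<dots> = F * 4 powr \<beta> * E * U powr (\<beta> - 1) / y powr \<beta>"
  proof -
    have "t = y / (4 * U)" using U1 by (simp add: t_def h_def field_simps)
    hence "t powr \<beta> = y powr \<beta> / (4 powr \<beta> * U powr \<beta>)"
      using U1 y by (simp add: powr_divide powr_mult)
    moreover have "U powr \<beta> = U * U powr (\<beta> - 1)"
      using U1 by (simp add: powr_diff)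
    ultimately have yp: "y powr \<beta> = U * t powr \<beta> * U powr (\<beta> - 1) * 4 powr \<beta>"
      using U1 y tpos by (simp add: field_simps)
    have p1: "U powr (\<beta> - 1) > 0" "(4::real) powr \<beta> > 0" using U1 by auto
    show ?thesis unfolding yp using U1 tpos F0 p1 by (simp add: field_simps)
  qed
  finally have "measure (Zfst w i k) {z. real z > y} \<le> F * 4 powr \<beta> * E * U powr (\<beta> - 1) / y powr \<beta>" .
  thus ?thesis
    by (simp add: measure_pmf.emeasure_eq_measure F_def E_def U_def ennreal_leI)
qed


lemma split_bound:
  fixes M :: "'a pmf" and s a b :: real and Z :: "'a \<Rightarrow> real"
  assumes "b \<ge> 0"
  shows "emeasure M {t. s + Z t > a + b} \<le> indicator {s. s > a} s + emeasure M {t. Z t > b}"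
proof (cases "s > a")
  case True
  have "emeasure M {t. s + Z t > a + b} \<le> 1" by (simp add: measure_pmf.emeasure_le_1)
  also have "\<dots> \<le> indicator {s. s > a} s + emeasure M {t. Z t > b}" using True by simp
  finally show ?thesis .
next
  case False
  have "emeasure M {t. s + Z t > a + b} \<le> emeasure M {t. Z t > b}"
    using False by (intro emeasure_mono) auto
  thus ?thesis using False by simp
qed

lemma nn_integral_indicator_comp:
  fixes M :: "'a pmf" and Z :: "'a \<Rightarrow> real"
  shows "(\<integral>\<^sup>+t. indicator {s. s > c} (Z t) \<partial>M) = emeasure M {t. Z t > c}"
proof -
  have "(\<integral>\<^sup>+t. indicator {s. s > c} (Z t) \<partial>M) = (\<integral>\<^sup>+t. indicator {t. Z t > c} t \<partial>M)"
    by (intro nn_integral_cong) (simp add: indicator_def)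
  also have "\<dots> = emeasure M {t. Z t > c}" by (rule nn_integral_indicator) simp
  finally show ?thesis .
qed

lemma Zpath_snd_tail:
  fixes y :: real
  assumes y: "y \<ge> 0"
  shows "emeasure (Zpath w i g) {t. real (snd t) > real (Suc g) * y}
      \<le> (\<Sum>l\<le>g. emeasure (Zfst w i l) {z. real z > y})"
proof (induction g)
  case 0
  have "emeasure (Zpath w i 0) {t. real (snd t) > real (Suc 0) * y}
       = emeasure (Zfst w i 0) {z. real z > y}"
    by (simp add: Zfst_0 vimage_def)
  then show ?case by simp
next
  case (Suc g)
  define a where "a = w (i + int g)"
  have "emeasure (Zpath w i (Suc g)) {t. real (snd t) > real (Suc (Suc g)) * y}
      = (\<integral>\<^sup>+t. emeasure (geom_sum a (fst t)) {z'. real (snd t) + real z' > real (Suc g) * y + y} \<partial>Zpath w i g)"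
    by (simp add: a_def case_prod_unfold vimage_def algebra_simps)
  also have "\<dots> \<le> (\<integral>\<^sup>+t. indicator {s. s > real (Suc g) * y} (real (snd t))
                        + emeasure (geom_sum a (fst t)) {z'. real z' > y} \<partial>Zpath w i g)"
    by (intro nn_integral_mono split_bound[OF y])
  also have "\<dots> = (\<integral>\<^sup>+t. indicator {s. s > real (Suc g) * y} (real (snd t)) \<partial>Zpath w i g)
                  + (\<integral>\<^sup>+t. emeasure (geom_sum a (fst t)) {z'. real z' > y} \<partial>Zpath w i g)"
    by (rule nn_integral_add) auto
  also have "(\<integral>\<^sup>+t. emeasure (geom_sum a (fst t)) {z'. real z' > y} \<partial>Zpath w i g)
           = emeasure (Zfst w i (Suc g)) {z. real z > y}"
    unfolding Zfst_Suc emeasure_bind_pmf unfolding Zfst_def nn_integral_map_pmf a_def ..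
  also have "(\<integral>\<^sup>+t. indicator {s. s > real (Suc g) * y} (real (snd t)) \<partial>Zpath w i g)
           = emeasure (Zpath w i g) {t. real (snd t) > real (Suc g) * y}"
    by (rule nn_integral_indicator_comp)
  also have "emeasure (Zpath w i g) {t. real (snd t) > real (Suc g) * y} + emeasure (Zfst w i (Suc g)) {z. real z > y}
      \<le> (\<Sum>l\<le>g. emeasure (Zfst w i l) {z. real z > y}) + emeasure (Zfst w i (Suc g)) {z. real z > y}"
    by (rule add_right_mono[OF Suc.IH])
  also have "\<dots> = (\<Sum>l\<le>Suc g. emeasure (Zfst w i l) {z. real z > y})"
    by simp
  finally show ?case .
qed

lemma Ztot_tail:
  fixes Y :: real
  assumes Y: "Y \<ge> 0"
  shows "emeasure (Ztot w n k) {s. real s > real k * Y}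
      \<le> (\<Sum>j\<in>{1..k}. emeasure (Zpath w (int j) n) {t. real (snd t) > Y})"
proof (induction k)
  case 0
  then show ?case by simp
next
  case (Suc k)
  have "emeasure (Ztot w n (Suc k)) {s. real s > real (Suc k) * Y}
      = (\<integral>\<^sup>+s. emeasure (Zpath w (int (Suc k)) n) {t. real s + real (snd t) > real k * Y + Y} \<partial>Ztot w n k)"
    by (simp add: vimage_def algebra_simps)
  also have "\<dots> \<le> (\<integral>\<^sup>+s. indicator {s. s > real k * Y} (real s)
                        + emeasure (Zpath w (int (Suc k)) n) {t. real (snd t) > Y} \<partial>Ztot w n k)"
    by (intro nn_integral_mono split_bound[OF Y])
  also have "\<dots> = (\<integral>\<^sup>+s. indicator {s. s > real k * Y} (real s) \<partial>Ztot w n k)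
                  + (\<integral>\<^sup>+s. emeasure (Zpath w (int (Suc k)) n) {t. real (snd t) > Y} \<partial>Ztot w n k)"
    by (rule nn_integral_add) auto
  also have "(\<integral>\<^sup>+s. emeasure (Zpath w (int (Suc k)) n) {t. real (snd t) > Y} \<partial>Ztot w n k)
     = emeasure (Zpath w (int (Suc k)) n) {t. real (snd t) > Y}"
    by (simp add: measure_pmf.emeasure_space_1)
  also have "(\<integral>\<^sup>+s. indicator {s. s > real k * Y} (real s) \<partial>Ztot w n k)
           = emeasure (Ztot w n k) {s. real s > real k * Y}"
    by (rule nn_integral_indicator_comp)
  also have "emeasure (Ztot w n k) {s. real s > real k * Y} + emeasure (Zpath w (int (Suc k)) n) {t. real (snd t) > Y}
     \<le> (\<Sum>j\<in>{1..k}. emeasure (Zpath w (int j) n) {t. real (snd t) > Y}) + emeasure (Zpath w (int (Suc k)) n) {t. real (snd t) > Y}"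
    by (rule add_right_mono[OF Suc.IH])
  also have "\<dots> = (\<Sum>j\<in>{1..Suc k}. emeasure (Zpath w (int j) n) {t. real (snd t) > Y})"
    by simp
  finally show ?case .
qed


lemma Em_prod: "Em w i k = (\<Prod>l\<le>k. aa w i l)"
  by (induction k) (auto simp: mult.commute)

lemma Um_sum: "Um w i k = (\<Sum>j\<le>Suc k. \<Prod>l\<in>{j..k}. aa w i l)"
proof (induction k)
  case 0
  then show ?case by simp
next
  case (Suc k)
  have "(\<Sum>j\<le>Suc (Suc k). \<Prod>l\<in>{j..Suc k}. aa w i l)
      = (\<Sum>j\<le>Suc k. \<Prod>l\<in>{j..Suc k}. aa w i l) + 1"
    by simp
  also have "(\<Sum>j\<le>Suc k. \<Prod>l\<in>{j..Suc k}. aa w i l) = (\<Sum>j\<le>Suc k. aa w i (Suc k) * (\<Prod>l\<in>{j..k}. aa w i l))"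
  proof (intro sum.cong refl)
    fix j assume "j \<in> {..Suc k}"
    hence "j \<le> Suc k" by simp
    thus "(\<Prod>l\<in>{j..Suc k}. aa w i l) = aa w i (Suc k) * (\<Prod>l\<in>{j..k}. aa w i l)"
      by (simp add: mult.commute)
  qed
  finally show ?case using Suc by (simp add: sum_distrib_left distrib_left)
qed

lemma mul_powr_self: "(a::real) \<ge> 0 \<Longrightarrow> a * a powr g = a powr (1 + g)"
  by (cases "a = 0") (simp_all add: powr_add)

definition Tj :: "(int \<Rightarrow> real) \<Rightarrow> int \<Rightarrow> nat \<Rightarrow> nat \<Rightarrow> real" where
  "Tj w i k j = (\<Prod>l\<in>{j..k}. aa w i l)"

lemma Tj_nonneg: "Tj w i k j \<ge> 0"
  by (simp add: Tj_def prod_nonneg aa_nonneg)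

lemma EU_bound:
  fixes \<gamma> :: real
  assumes g: "\<gamma> \<ge> 0"
  shows "Em w i k * Um w i k powr \<gamma>
     \<le> real (k+2) powr \<gamma> * (\<Sum>j\<le>Suc k. \<Prod>l\<le>k. (if j \<le> l then aa w i l powr (1+\<gamma>) else aa w i l))"
proof -
  define J where "J = {..Suc k}"
  define T where "T = Tj w i k"
  have fJ: "finite J" "J \<noteq> {}" by (auto simp: J_def)
  have cJ: "card J = k + 2" by (simp add: J_def)
  define Mx where "Mx = Max (T ` J)"
  have MxT: "Mx \<in> T ` J" unfolding Mx_def using fJ by (intro Max_in) auto
  then obtain j0 where j0: "j0 \<in> J" "T j0 = Mx" by auto
  have Tle: "T j \<le> Mx" if "j \<in> J" for j unfolding Mx_def using fJ that by (intro Max_ge) auto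
  have T0: "T j \<ge> 0" for j by (simp add: T_def Tj_nonneg)
  have U: "Um w i k = (\<Sum>j\<in>J. T j)" by (simp add: Um_sum J_def T_def Tj_def)
  have "Um w i k \<le> (\<Sum>j\<in>J. Mx)" unfolding U by (intro sum_mono Tle)
  also have "\<dots> = real (k+2) * Mx" using cJ by simp
  finally have U1: "Um w i k \<le> real (k+2) * Mx" .
  have U0: "Um w i k \<ge> 0" using Um_ge1[of w i k] by simp
  have Mx0: "Mx \<ge> 0" using j0 T0 by metis
  have "Um w i k powr \<gamma> \<le> (real (k+2) * Mx) powr \<gamma>"
    using U1 U0 g by (intro powr_mono2) auto
  also have "\<dots> = real (k+2) powr \<gamma> * Mx powr \<gamma>" using Mx0 by (simp add: powr_mult)
  also have "Mx powr \<gamma> \<le> (\<Sum>j\<in>J. T j powr \<gamma>)"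
    using j0 fJ by (metis member_le_sum powr_ge_zero)
  finally have UP: "Um w i k powr \<gamma> \<le> real (k+2) powr \<gamma> * (\<Sum>j\<in>J. T j powr \<gamma>)"
    by (simp add: mult_left_mono)
  have E0: "Em w i k \<ge> 0" by (rule Em_nonneg)
  have "Em w i k * Um w i k powr \<gamma> \<le> Em w i k * (real (k+2) powr \<gamma> * (\<Sum>j\<in>J. T j powr \<gamma>))"
    using UP E0 by (rule mult_left_mono)
  also have "\<dots> = real (k+2) powr \<gamma> * (\<Sum>j\<in>J. Em w i k * T j powr \<gamma>)"
    by (simp add: sum_distrib_left sum_distrib_right mult_ac)
  also have "(\<Sum>j\<in>J. Em w i k * T j powr \<gamma>)
      = (\<Sum>j\<le>Suc k. \<Prod>l\<le>k. (if j \<le> l then aa w i l powr (1+\<gamma>) else aa w i l))"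
    unfolding J_def
  proof (intro sum.cong refl)
    fix j
    have set: "{j..k} = {l \<in> {..k}. j \<le> l}" by auto
    have "T j powr \<gamma> = (\<Prod>l\<le>k. (if j \<le> l then aa w i l powr \<gamma> else 1))"
      unfolding T_def Tj_def prod_powr_distrib set by (rule prod.inter_filter) simp
    hence "Em w i k * T j powr \<gamma> = (\<Prod>l\<le>k. aa w i l * (if j \<le> l then aa w i l powr \<gamma> else 1))"
      by (simp add: Em_prod prod.distrib)
    also have "\<dots> = (\<Prod>l\<le>k. (if j \<le> l then aa w i l powr (1+\<gamma>) else aa w i l))"
      by (intro prod.cong refl) (simp add: mul_powr_self aa_nonneg)
    finally show "Em w i k * T j powr \<gamma> = (\<Prod>l\<le>k. (if j \<le> l then aa w i l powr (1+\<gamma>) else aa w i l))" .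
  qed
  finally show ?thesis .
qed


lemma Ap_measurable[measurable]: "Ap \<in> borel_measurable borel"
  unfolding Ap_def by measurable

lemma env_prod:
  assumes P: "prob_space P" and J: "finite J"
    and f: "\<And>i. i \<in> J \<Longrightarrow> f i \<in> borel_measurable P"
  shows "(\<integral>\<^sup>+ w. (\<Prod>i\<in>J. f i (w i)) \<partial>env P) = (\<Prod>i\<in>J. integral\<^sup>N P (f i))"
proof -
  interpret product_prob_space "\<lambda>_::int. P" UNIV
    by (simp add: product_prob_space_def product_sigma_finite_def P prob_space_imp_sigma_finite
       product_prob_space_axioms_def)
  have "(\<Prod>i\<in>J. integral\<^sup>N P (f i)) = (\<integral>\<^sup>+ x. (\<Prod>i\<in>J. f i (x i)) \<partial>Pi\<^sub>M J (\<lambda>_. P))"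
    by (rule product_nn_integral_prod[symmetric]) (use J f in auto)
  also have "\<dots> = (\<integral>\<^sup>+ x. (\<Prod>i\<in>J. f i (x i)) \<partial>distr (PiM UNIV (\<lambda>_. P)) (PiM J (\<lambda>_. P)) (\<lambda>x. restrict x J))"
    by (subst distr_PiM_restrict_finite) (use J in auto)
  also have "\<dots> = (\<integral>\<^sup>+ w. (\<Prod>i\<in>J. f i (restrict w J i)) \<partial>PiM UNIV (\<lambda>_. P))"
    by (subst nn_integral_distr) (use J f in auto)
  also have "\<dots> = (\<integral>\<^sup>+ w. (\<Prod>i\<in>J. f i (w i)) \<partial>env P)"
    unfolding env_def by (intro nn_integral_cong prod.cong) auto
  finally show ?thesis by simp
qed

lemma env_prod_inj:
  fixes \<phi> :: "nat \<Rightarrow> int"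
  assumes P: "prob_space P" and L: "finite L" and inj: "inj_on \<phi> L"
    and g: "\<And>l. l \<in> L \<Longrightarrow> g l \<in> borel_measurable P"
  shows "(\<integral>\<^sup>+ w. (\<Prod>l\<in>L. g l (w (\<phi> l))) \<partial>env P) = (\<Prod>l\<in>L. integral\<^sup>N P (g l))"
proof -
  define f where "f i = g (the_inv_into L \<phi> i)" for i
  have fl: "f (\<phi> l) = g l" if "l \<in> L" for l
    using that inj by (simp add: f_def the_inv_into_f_f)
  have "(\<integral>\<^sup>+ w. (\<Prod>l\<in>L. g l (w (\<phi> l))) \<partial>env P) = (\<integral>\<^sup>+ w. (\<Prod>i\<in>\<phi> ` L. f i (w i)) \<partial>env P)"
    by (intro nn_integral_cong) (simp add: prod.reindex[OF inj] fl)
  also have "\<dots> = (\<Prod>i\<in>\<phi> ` L. integral\<^sup>N P (f i))"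
    by (rule env_prod[OF P]) (use L g fl in auto)
  also have "\<dots> = (\<Prod>l\<in>L. integral\<^sup>N P (g l))"
    by (simp add: prod.reindex[OF inj] fl)
  finally show ?thesis .
qed

lemma annealed_EU:
  fixes \<beta> M :: real
  assumes P: "prob_space P" and sP: "sets P = sets borel" and b: "\<beta> \<ge> 1" and M0: "M \<ge> 0"
    and mA: "(\<integral>\<^sup>+x. ennreal (Ap x) \<partial>P) \<le> ennreal M"
    and mB: "(\<integral>\<^sup>+x. ennreal (Ap x powr \<beta>) \<partial>P) \<le> ennreal M"
  shows "(\<integral>\<^sup>+w. ennreal (Em w i k * Um w i k powr (\<beta> - 1)) \<partial>env P)
         \<le> ennreal (real (k+2) powr \<beta> * M ^ (k+1))"
proof -
  define g where "g j l x = (if j \<le> l then Ap x powr \<beta> else Ap x)" for j l :: nat and x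
  define \<phi> where "\<phi> l = i - 1 + int l" for l
  have inj: "inj_on \<phi> L" for L by (auto simp: \<phi>_def inj_on_def)
  have gm: "(\<lambda>x. ennreal (g j l x)) \<in> borel_measurable P" for j l
    using sP unfolding g_def by (simp add: measurable_cong_sets[OF sP refl])
  have gi: "(\<integral>\<^sup>+x. ennreal (g j l x) \<partial>P) \<le> ennreal M" for j l
    using mA mB by (cases "j \<le> l") (simp_all add: g_def)
  have g0: "g j l x \<ge> 0" for j l x by (simp add: g_def Ap_nonneg)
  have ptw: "ennreal (Em w i k * Um w i k powr (\<beta> - 1))
      \<le> ennreal (real (k+2) powr (\<beta> - 1)) * (\<Sum>j\<le>Suc k. \<Prod>l\<le>k. ennreal (g j l (w (\<phi> l))))" for w
  proof -
    have "Em w i k * Um w i k powr (\<beta> - 1)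
      \<le> real (k+2) powr (\<beta> - 1) * (\<Sum>j\<le>Suc k. \<Prod>l\<le>k. (if j \<le> l then aa w i l powr (1+(\<beta> - 1)) else aa w i l))"
      using b by (intro EU_bound) auto
    also have "(\<Sum>j\<le>Suc k. \<Prod>l\<le>k. (if j \<le> l then aa w i l powr (1+(\<beta> - 1)) else aa w i l))
        = (\<Sum>j\<le>Suc k. \<Prod>l\<le>k. g j l (w (\<phi> l)))"
    proof -
      have e: "1 + (\<beta> - 1) = \<beta>" by simp
      show ?thesis unfolding e g_def aa_def \<phi>_def ..
    qed
    finally have "ennreal (Em w i k * Um w i k powr (\<beta> - 1))
        \<le> ennreal (real (k+2) powr (\<beta> - 1) * (\<Sum>j\<le>Suc k. \<Prod>l\<le>k. g j l (w (\<phi> l))))"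
      by (rule ennreal_leI)
    also have "\<dots> = ennreal (real (k+2) powr (\<beta> - 1)) * (\<Sum>j\<le>Suc k. \<Prod>l\<le>k. ennreal (g j l (w (\<phi> l))))"
      using g0 by (simp add: ennreal_mult sum_nonneg prod_nonneg prod_ennreal)
    finally show ?thesis .
  qed
  have "(\<integral>\<^sup>+w. ennreal (Em w i k * Um w i k powr (\<beta> - 1)) \<partial>env P)
     \<le> (\<integral>\<^sup>+w. ennreal (real (k+2) powr (\<beta> - 1)) * (\<Sum>j\<le>Suc k. \<Prod>l\<le>k. ennreal (g j l (w (\<phi> l)))) \<partial>env P)"
    by (intro nn_integral_mono ptw)
  also have "\<dots> = ennreal (real (k+2) powr (\<beta> - 1)) * (\<Sum>j\<le>Suc k. \<integral>\<^sup>+w. (\<Prod>l\<le>k. ennreal (g j l (w (\<phi> l)))) \<partial>env P)"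
  proof -
    have meas: "(\<lambda>w. \<Prod>l\<le>k. ennreal (g j l (w (\<phi> l)))) \<in> borel_measurable (env P)" for j
    proof -
      have "(\<lambda>w. w (\<phi> l)) \<in> measurable (env P) P" for l
        unfolding env_def by (rule measurable_component_singleton) simp
      hence "(\<lambda>w. ennreal (g j l (w (\<phi> l)))) \<in> borel_measurable (env P)" for l
        using gm[of j l] by (rule measurable_compose)
      thus ?thesis by (intro borel_measurable_prod_ennreal) auto
    qed
    have "(\<lambda>w. \<Sum>j\<le>Suc k. \<Prod>l\<le>k. ennreal (g j l (w (\<phi> l)))) \<in> borel_measurable (env P)"
      using meas by (intro borel_measurable_sum) auto
    hence "(\<integral>\<^sup>+w. ennreal (real (k+2) powr (\<beta> - 1)) * (\<Sum>j\<le>Suc k. \<Prod>l\<le>k. ennreal (g j l (w (\<phi> l)))) \<partial>env P)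
       = ennreal (real (k+2) powr (\<beta> - 1)) * (\<integral>\<^sup>+w. (\<Sum>j\<le>Suc k. \<Prod>l\<le>k. ennreal (g j l (w (\<phi> l)))) \<partial>env P)"
      by (rule nn_integral_cmult)
    also have "(\<integral>\<^sup>+w. (\<Sum>j\<le>Suc k. \<Prod>l\<le>k. ennreal (g j l (w (\<phi> l)))) \<partial>env P)
       = (\<Sum>j\<le>Suc k. \<integral>\<^sup>+w. (\<Prod>l\<le>k. ennreal (g j l (w (\<phi> l)))) \<partial>env P)"
      by (rule nn_integral_sum) (use meas in auto)
    finally show ?thesis .
  qed
  also have "\<dots> \<le> ennreal (real (k+2) powr (\<beta> - 1)) * (\<Sum>j\<le>Suc k. ennreal M ^ (k+1))"
  proof (intro mult_left_mono sum_mono)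
    fix j
    have "(\<integral>\<^sup>+w. (\<Prod>l\<le>k. ennreal (g j l (w (\<phi> l)))) \<partial>env P) = (\<Prod>l\<le>k. \<integral>\<^sup>+x. ennreal (g j l x) \<partial>P)"
      by (rule env_prod_inj[OF P _ inj]) (use gm in auto)
    also have "\<dots> \<le> (\<Prod>l\<le>(k::nat). ennreal M)"
      by (intro prod_mono_ennreal) (use gi in auto)
    finally show "(\<integral>\<^sup>+w. (\<Prod>l\<le>k. ennreal (g j l (w (\<phi> l)))) \<partial>env P) \<le> ennreal M ^ (k+1)" by simp
  qed auto
  also have "\<dots> = ennreal (real (k+2) powr \<beta> * M ^ (k+1))"
  proof -
    have "real (k+2) powr \<beta> = real (k+2) powr (\<beta> - 1) * real (k+2)"
      by (simp add: powr_diff)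
    have "(\<Sum>j\<le>Suc k. ennreal M ^ (k+1)) = (\<Sum>j\<le>Suc k. ennreal (M ^ (k+1)))"
      by (intro sum.cong refl) (simp only: ennreal_power[OF M0])
    also have "\<dots> = ennreal (\<Sum>j\<le>Suc k. M ^ (k+1))"
      by (rule sum_ennreal) (use M0 in simp)
    finally have s1: "(\<Sum>j\<le>Suc k. ennreal M ^ (k+1)) = ennreal (\<Sum>j\<le>Suc k. M ^ (k+1))" .
    have s2: "(\<Sum>j\<le>Suc k. M ^ (k+1)) = real (k+2) * M ^ (k+1)" by simp
    have "ennreal (real (k+2) powr (\<beta> - 1)) * (\<Sum>j\<le>Suc k. ennreal M ^ (k+1))
        = ennreal (real (k+2) powr (\<beta> - 1) * (real (k+2) * M ^ (k+1)))"
      unfolding s1 s2 using M0 by (simp add: ennreal_mult)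
    also have "\<dots> = ennreal (real (k+2) powr \<beta> * M ^ (k+1))"
      using \<open>real (k+2) powr \<beta> = real (k+2) powr (\<beta> - 1) * real (k+2)\<close> by (simp add: mult_ac)
    finally show ?thesis .
  qed
  finally show ?thesis .
qed


lemma integral_le_from_nn:
  fixes f :: "'a \<Rightarrow> real"
  assumes f0: "\<And>x. f x \<ge> 0" and le: "(\<integral>\<^sup>+x. ennreal (f x) \<partial>M) \<le> ennreal B" and B: "B \<ge> 0"
  shows "integral\<^sup>L M f \<le> B"
proof (cases "integrable M f")
  case True
  have "integral\<^sup>L M f = enn2real (\<integral>\<^sup>+x. ennreal (f x) \<partial>M)"
    using True f0 by (simp add: integral_eq_nn_integral)
  also have "\<dots> \<le> enn2real (ennreal B)"
    using le by (intro enn2real_mono) auto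
  also have "\<dots> = B" using B by simp
  finally show ?thesis .
next
  case False
  then show ?thesis using B by (simp add: not_integrable_integral_eq)
qed

lemma aa_meas:
  assumes sP: "sets P = sets borel"
  shows "(\<lambda>w. aa w i l) \<in> borel_measurable (env P)"
proof -
  have c: "(\<lambda>w. w (i - 1 + int l)) \<in> measurable (env P) P"
    unfolding env_def by (rule measurable_component_singleton) simp
  have "Ap \<in> borel_measurable P" by (simp add: measurable_cong_sets[OF sP refl])
  from measurable_compose[OF c this] show ?thesis by (simp add: aa_def)
qed

lemma Em_meas:
  assumes sP: "sets P = sets borel"
  shows "(\<lambda>w. Em w i k) \<in> borel_measurable (env P)"
  unfolding Em_prod using aa_meas[OF sP] by (intro borel_measurable_prod) auto

lemma Um_meas:
  assumes sP: "sets P = sets borel"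
  shows "(\<lambda>w. Um w i k) \<in> borel_measurable (env P)"
  unfolding Um_sum using aa_meas[OF sP] by (intro borel_measurable_sum borel_measurable_prod) auto

lemma EU_meas:
  assumes sP: "sets P = sets borel"
  shows "(\<lambda>w. ennreal (c * Em w i k * Um w i k powr g)) \<in> borel_measurable (env P)"
  using Em_meas[OF sP] Um_meas[OF sP] by measurable

lemma quenched_bound:
  fixes x \<beta> :: real
  assumes b: "\<beta> \<ge> 1" and n: "n \<ge> 1" and x: "x > 0"
  defines "y \<equiv> x / (real n * real (n+1))"
  shows "ennreal (measure_pmf.prob (Ztot w n n) {s. real s > x})
     \<le> (\<Sum>j\<in>{1..n}. \<Sum>t\<le>n. ennreal (fact (nat \<lceil>\<beta>\<rceil>) * 4 powr \<beta> / y powr \<beta> * Em w (int j) t * Um w (int j) t powr (\<beta> - 1)))"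
proof -
  have y: "y > 0" using n x by (simp add: y_def)
  define Y where "Y = real (Suc n) * y"
  have Y: "Y \<ge> 0" using y by (simp add: Y_def)
  have nz: "real n * real (n+1) \<noteq> 0" using n by simp
  have xY: "x = real n * Y" using nz unfolding Y_def y_def by (simp add: field_simps)
  have "ennreal (measure_pmf.prob (Ztot w n n) {s. real s > x}) = emeasure (Ztot w n n) {s. real s > real n * Y}"
    by (simp add: measure_pmf.emeasure_eq_measure xY)
  also have "\<dots> \<le> (\<Sum>j\<in>{1..n}. emeasure (Zpath w (int j) n) {t. real (snd t) > real (Suc n) * y})"
    using Ztot_tail[OF Y] by (simp add: Y_def)
  also have "\<dots> \<le> (\<Sum>j\<in>{1..n}. \<Sum>t\<le>n. emeasure (Zfst w (int j) t) {z. real z > y})"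
    by (intro sum_mono Zpath_snd_tail) (use y in auto)
  also have "\<dots> \<le> (\<Sum>j\<in>{1..n}. \<Sum>t\<le>n. ennreal (fact (nat \<lceil>\<beta>\<rceil>) * 4 powr \<beta> / y powr \<beta> * Em w (int j) t * Um w (int j) t powr (\<beta> - 1)))"
  proof (intro sum_mono)
    fix j t
    have "emeasure (Zfst w (int j) t) {z. real z > y}
       \<le> ennreal (fact (nat \<lceil>\<beta>\<rceil>) * 4 powr \<beta> * Em w (int j) t * Um w (int j) t powr (\<beta> - 1) / y powr \<beta>)"
      by (rule Zfst_tail[OF y b])
    also have "\<dots> = ennreal (fact (nat \<lceil>\<beta>\<rceil>) * 4 powr \<beta> / y powr \<beta> * Em w (int j) t * Um w (int j) t powr (\<beta> - 1))"
      by (simp add: field_simps)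
    finally show "emeasure (Zfst w (int j) t) {z. real z > y} \<le> \<dots>" .
  qed
  finally show ?thesis .
qed

lemma annealed_bound:
  fixes \<beta> M x :: real
  assumes P: "prob_space P" and sP: "sets P = sets borel" and b: "\<beta> \<ge> 1" and M1: "M \<ge> 1"
    and mA: "(\<integral>\<^sup>+x. ennreal (Ap x) \<partial>P) \<le> ennreal M"
    and mB: "(\<integral>\<^sup>+x. ennreal (Ap x powr \<beta>) \<partial>P) \<le> ennreal M"
    and n: "n \<ge> 1" and x: "x > 0"
  shows "annealed_tail P n n x \<le> fact (nat \<lceil>\<beta>\<rceil>) * 4 powr \<beta> * (real n * real (n+1)) powr (1 + \<beta>)
            * real (n+2) powr \<beta> * M ^ (n+1) / x powr \<beta>"
proof -
  define y where "y = x / (real n * real (n+1))"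
  have y: "y > 0" using n x by (simp add: y_def)
  define c where "c = fact (nat \<lceil>\<beta>\<rceil>) * 4 powr \<beta> / y powr \<beta>"
  have c0: "c \<ge> 0" by (simp add: c_def)
  have M0: "M \<ge> 0" using M1 by simp
  define B where "B = real n * real (n+1) * (c * (real (n+2) powr \<beta> * M ^ (n+1)))"
  have "(\<integral>\<^sup>+w. ennreal (measure_pmf.prob (Ztot w n n) {s. real s > x}) \<partial>env P)
      \<le> (\<integral>\<^sup>+w. (\<Sum>j\<in>{1..n}. \<Sum>t\<le>n. ennreal (c * Em w (int j) t * Um w (int j) t powr (\<beta> - 1))) \<partial>env P)"
    by (intro nn_integral_mono) (use quenched_bound[OF b n x] in \<open>simp add: c_def y_def\<close>)
  also have "\<dots> = (\<Sum>j\<in>{1..n}. \<Sum>t\<le>n. \<integral>\<^sup>+w. ennreal (c * Em w (int j) t * Um w (int j) t powr (\<beta> - 1)) \<partial>env P)"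
    using EU_meas[OF sP]
    by (simp add: nn_integral_sum borel_measurable_sum)
  also have "\<dots> \<le> (\<Sum>j\<in>{1..n}. \<Sum>t\<le>n. ennreal (c * (real (n+2) powr \<beta> * M ^ (n+1))))"
  proof (intro sum_mono)
    fix j t assume t: "t \<in> {..n}"
    have "(\<integral>\<^sup>+w. ennreal (c * Em w (int j) t * Um w (int j) t powr (\<beta> - 1)) \<partial>env P)
        = (\<integral>\<^sup>+w. ennreal c * ennreal (Em w (int j) t * Um w (int j) t powr (\<beta> - 1)) \<partial>env P)"
    proof (intro nn_integral_cong)
      fix w
      have "0 \<le> Em w (int j) t * Um w (int j) t powr (\<beta> - 1)" by (simp add: Em_nonneg)
      thus "ennreal (c * Em w (int j) t * Um w (int j) t powr (\<beta> - 1)) = ennreal c * ennreal (Em w (int j) t * Um w (int j) t powr (\<beta> - 1))"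
        using c0 by (simp add: ennreal_mult[symmetric] mult.assoc)
    qed
    also have "\<dots> = ennreal c * (\<integral>\<^sup>+w. ennreal (Em w (int j) t * Um w (int j) t powr (\<beta> - 1)) \<partial>env P)"
      using EU_meas[OF sP, of 1 "int j" t "\<beta> - 1"] by (intro nn_integral_cmult) simp
    also have "\<dots> \<le> ennreal c * ennreal (real (t+2) powr \<beta> * M ^ (t+1))"
      by (intro mult_left_mono annealed_EU[OF P sP b M0 mA mB]) auto
    also have "\<dots> \<le> ennreal c * ennreal (real (n+2) powr \<beta> * M ^ (n+1))"
    proof (intro mult_left_mono ennreal_leI mult_mono)
      show "real (t+2) powr \<beta> \<le> real (n+2) powr \<beta>" using t b by (intro powr_mono2) auto
      show "M ^ (t+1) \<le> M ^ (n+1)" using t M1 by (intro power_increasing) auto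
    qed (use M0 in auto)
    also have "\<dots> = ennreal (c * (real (n+2) powr \<beta> * M ^ (n+1)))"
      using c0 M0 by (simp add: ennreal_mult)
    finally show "(\<integral>\<^sup>+w. ennreal (c * Em w (int j) t * Um w (int j) t powr (\<beta> - 1)) \<partial>env P)
        \<le> ennreal (c * (real (n+2) powr \<beta> * M ^ (n+1)))" .
  qed
  also have "\<dots> = ennreal B"
  proof -
    define C where "C = c * (real (n+2) powr \<beta> * M ^ (n+1))"
    have C0: "C \<ge> 0" using c0 M0 by (simp add: C_def)
    have "(\<Sum>j\<in>{1..n}. \<Sum>t\<le>n. ennreal C) = (\<Sum>j\<in>{1..n}. ennreal (\<Sum>t\<le>n. C))"
      by (intro sum.cong refl sum_ennreal) (use C0 in auto)
    also have "\<dots> = ennreal (\<Sum>j\<in>{1..n}. \<Sum>t\<le>n. C)"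
      by (rule sum_ennreal) (use C0 in auto)
    also have "(\<Sum>j\<in>{1..n}. \<Sum>t\<le>n. C) = B" by (simp add: B_def C_def mult_ac)
    finally show ?thesis unfolding C_def .
  qed
  finally have int: "(\<integral>\<^sup>+w. ennreal (measure_pmf.prob (Ztot w n n) {s. real s > x}) \<partial>env P) \<le> ennreal B" .
  have B0: "B \<ge> 0" using c0 M0 by (simp add: B_def)
  have "annealed_tail P n n x \<le> B"
    unfolding annealed_tail_def by (rule integral_le_from_nn[OF _ int B0]) simp
  also have "B = fact (nat \<lceil>\<beta>\<rceil>) * 4 powr \<beta> * (real n * real (n+1)) powr (1 + \<beta>)
            * real (n+2) powr \<beta> * M ^ (n+1) / x powr \<beta>"
  proof -
    define N where "N = real n * real (n+1)"
    have nn: "N > 0" using n by (simp add: N_def)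
    define Q where "Q = N powr \<beta>"
    have Q0: "Q > 0" using nn by (simp add: Q_def)
    have yp0: "y powr \<beta> > 0" using y by simp
    have xq: "x powr \<beta> = y powr \<beta> * Q"
      unfolding Q_def y_def N_def[symmetric] using x nn by (simp add: powr_divide)
    have NQ: "N powr (1 + \<beta>) = N * Q"
      using nn by (simp add: powr_add Q_def)
    define K where "K = fact (nat \<lceil>\<beta>\<rceil>) * 4 powr \<beta>"
    define R where "R = real (n+2) powr \<beta> * M ^ (n+1)"
    have "B = N * (K / y powr \<beta> * R)" by (simp add: B_def c_def K_def R_def N_def)
    also have "\<dots> = K * (N * Q) * R / (y powr \<beta> * Q)" using Q0 yp0 by (simp add: field_simps)
    also have "\<dots> = K * N powr (1 + \<beta>) * R / x powr \<beta>" by (simp add: NQ xq)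
    finally show ?thesis by (simp add: K_def R_def N_def mult_ac)
  qed
  finally show ?thesis .
qed


lemma exp_taylor2: "exp (u::real) \<le> 1 + u + u^2 * exp \<bar>u\<bar>"
proof -
  obtain t where t: "\<bar>t\<bar> \<le> \<bar>u\<bar>" "exp u = (\<Sum>m<2. u ^ m / fact m) + exp t / fact 2 * u ^ 2"
    using Maclaurin_exp_le[of u 2] by blast
  have "exp t \<le> exp \<bar>u\<bar>" using t(1) by simp
  hence "exp t / 2 \<le> exp \<bar>u\<bar>" using exp_gt_zero[of t] by linarith
  hence "exp t / 2 * u^2 \<le> exp \<bar>u\<bar> * u^2"
    by (intro mult_right_mono) auto
  thus ?thesis using t(2) by (simp add: numeral_2_eq_2 mult.commute)
qed

lemma lin_le_exp: "(a::real) > 0 \<Longrightarrow> a * t \<le> exp (a * t)"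
  using exp_ge_add_one_self[of "a * t"] by linarith

lemma G_bound:
  fixes \<alpha> \<delta> c L :: real
  assumes a: "\<alpha> > 0" and d: "\<delta> > 0" and c0: "c \<ge> 0" and c1: "c \<le> \<delta>/2" and c2: "c \<le> \<alpha>/2"
  shows "exp (\<alpha> * L) * L^2 * exp (c * \<bar>L\<bar>) \<le> (4/\<delta>)^2 * exp ((\<alpha> + \<delta>) * L) + (4/\<alpha>)^2"
proof (cases "L \<ge> 0")
  case True
  have "(\<delta>/4) * L \<le> exp ((\<delta>/4) * L)" using d by (intro lin_le_exp) auto
  hence "L \<le> (4/\<delta>) * exp ((\<delta>/4) * L)" using d by (simp add: field_simps)
  hence "L^2 \<le> ((4/\<delta>) * exp ((\<delta>/4) * L))^2" using True by (intro power_mono) auto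
  also have "\<dots> = (4/\<delta>)^2 * exp ((\<delta>/2) * L)"
    by (simp add: power_mult_distrib exp_double[symmetric] power2_eq_square exp_add[symmetric])
  finally have L2: "L^2 \<le> (4/\<delta>)^2 * exp ((\<delta>/2) * L)" .
  have "exp (\<alpha> * L) * L^2 * exp (c * \<bar>L\<bar>) \<le> exp (\<alpha> * L) * ((4/\<delta>)^2 * exp ((\<delta>/2) * L)) * exp (c * \<bar>L\<bar>)"
    using L2 by (intro mult_right_mono mult_left_mono) auto
  also have "\<dots> = (4/\<delta>)^2 * exp ((\<alpha> + \<delta>/2 + c) * L)"
    using True by (simp add: exp_add[symmetric] algebra_simps)
  also have "\<dots> \<le> (4/\<delta>)^2 * exp ((\<alpha> + \<delta>) * L)"
    using True c1 by (intro mult_left_mono) (auto intro!: mult_right_mono)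
  finally show ?thesis by (smt (verit) zero_le_power2)
next
  case False
  define s where "s = - L"
  have s: "s > 0" using False by (simp add: s_def)
  have "(\<alpha>/4) * s \<le> exp ((\<alpha>/4) * s)" using a by (intro lin_le_exp) auto
  hence "s \<le> (4/\<alpha>) * exp ((\<alpha>/4) * s)" using a by (simp add: field_simps)
  hence "s^2 \<le> ((4/\<alpha>) * exp ((\<alpha>/4) * s))^2" using s by (intro power_mono) auto
  also have "\<dots> = (4/\<alpha>)^2 * exp ((\<alpha>/2) * s)"
    by (simp add: power_mult_distrib power2_eq_square exp_add[symmetric])
  finally have L2: "L^2 \<le> (4/\<alpha>)^2 * exp ((\<alpha>/2) * s)" by (simp add: s_def)
  have "exp (\<alpha> * L) * L^2 * exp (c * \<bar>L\<bar>) \<le> exp (\<alpha> * L) * ((4/\<alpha>)^2 * exp ((\<alpha>/2) * s)) * exp (c * \<bar>L\<bar>)"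
    using L2 by (intro mult_right_mono mult_left_mono) auto
  also have "\<dots> = (4/\<alpha>)^2 * exp (- (\<alpha>/2 - c) * s)"
    using s by (simp add: s_def exp_add[symmetric] algebra_simps)
  also have "\<dots> \<le> (4/\<alpha>)^2 * 1"
  proof -
    have "(\<alpha>/2 - c) * s \<ge> 0" using s c2 by simp
    hence "- (\<alpha>/2 - c) * s \<le> 0" by linarith
    hence "exp (- (\<alpha>/2 - c) * s) \<le> 1" by simp
    thus ?thesis by (intro mult_left_mono) auto
  qed
  finally show ?thesis by (smt (verit) exp_gt_zero zero_le_power2 mult_nonneg_nonneg)
qed

lemma taylor_bound:
  fixes \<alpha> \<epsilon> c L :: real
  assumes "0 \<le> \<epsilon>" "\<epsilon> \<le> c"
  shows "exp ((\<alpha> + \<epsilon>) * L) \<le> exp (\<alpha> * L) + \<epsilon> * (exp (\<alpha> * L) * L)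
           + \<epsilon>^2 * (exp (\<alpha> * L) * L^2 * exp (c * \<bar>L\<bar>))"
proof -
  have "exp (\<epsilon> * L) \<le> 1 + \<epsilon> * L + (\<epsilon> * L)^2 * exp \<bar>\<epsilon> * L\<bar>" by (rule exp_taylor2)
  also have "\<dots> \<le> 1 + \<epsilon> * L + (\<epsilon> * L)^2 * exp (c * \<bar>L\<bar>)"
    using assms by (intro add_left_mono mult_left_mono) (auto simp: abs_mult intro!: mult_right_mono)
  finally have "exp (\<alpha> * L) * exp (\<epsilon> * L) \<le> exp (\<alpha> * L) * (1 + \<epsilon> * L + (\<epsilon> * L)^2 * exp (c * \<bar>L\<bar>))"
    by (intro mult_left_mono) auto
  thus ?thesis by (simp add: exp_add[symmetric] algebra_simps power_mult_distrib)
qed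


lemma Aof_measurable[measurable]: "Aof \<in> borel_measurable borel"
  unfolding Aof_def by measurable

lemma exp_young:
  fixes \<alpha> L :: real assumes a: "\<alpha> \<ge> 1"
  shows "exp L \<le> exp (\<alpha> * L) / \<alpha> + (\<alpha> - 1) / \<alpha>"
proof -
  have "exp ((1 - 1/\<alpha>) *\<^sub>R 0 + (1/\<alpha>) *\<^sub>R (\<alpha> * L)) \<le> (1 - 1/\<alpha>) * exp 0 + (1/\<alpha>) * exp (\<alpha> * L)"
    using a by (intro convex_onD[OF exp_convex]) auto
  thus ?thesis using a by (simp add: field_simps)
qed

context
  fixes P :: "real measure" and \<alpha> \<delta> c :: real
  assumes P: "prob_space P" and sP: "sets P = sets borel"
    and m01: "measure P {0<..<1} = 1"
    and a1: "\<alpha> > 1"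
    and mA: "(\<integral>\<^sup>+ w. ennreal (Aof w powr \<alpha>) \<partial>P) = 1"
    and d0: "\<delta> > 0"
    and mD: "(\<integral>\<^sup>+ w. ennreal (Aof w powr (\<alpha> + \<delta>)) \<partial>P) < \<infinity>"
    and c_def: "c = min (\<delta>/2) (\<alpha>/2)"
begin

lemma AE01: "AE x in P. 0 < x \<and> x < 1"
proof -
  interpret prob_space P by (rule P)
  have "AE x in P. x \<in> {0<..<1}" using m01 by (intro AE_prob_1) simp
  thus ?thesis by simp
qed

lemma Aof_pos: "0 < x \<Longrightarrow> x < 1 \<Longrightarrow> Aof x > 0"
  by (simp add: Aof_def)

lemma Ap_eq: "0 < x \<Longrightarrow> x < 1 \<Longrightarrow> Ap x = Aof x"
  by (simp add: Ap_def Aof_def)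

lemma Aof_powr: "0 < x \<Longrightarrow> x < 1 \<Longrightarrow> Aof x powr p = exp (p * ln (Aof x))"
  using Aof_pos[of x] by (simp add: powr_def)

lemma measP[measurable]: "Aof \<in> borel_measurable P"
  by (simp add: measurable_cong_sets[OF sP refl])

definition G :: "real \<Rightarrow> real" where
  "G x = Aof x powr \<alpha> * (ln (Aof x))^2 * exp (c * \<bar>ln (Aof x)\<bar>)"

lemma G_meas[measurable]: "G \<in> borel_measurable P"
  unfolding G_def by measurable

lemma int_f0: "integrable P (\<lambda>x. Aof x powr \<alpha>)"
  by (rule integrableI_nonneg) (use mA in auto)

lemma int_fd: "integrable P (\<lambda>x. Aof x powr (\<alpha> + \<delta>))"
  by (rule integrableI_nonneg) (use mD in auto)

lemma c_props: "c \<ge> 0" "c \<le> \<delta>/2" "c \<le> \<alpha>/2"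
  using d0 a1 by (auto simp: c_def)

lemma int_G: "integrable P G"
proof (rule Bochner_Integration.integrable_bound)
  show "integrable P (\<lambda>x. (4/\<delta>)^2 * Aof x powr (\<alpha> + \<delta>) + (4/\<alpha>)^2)"
    using int_fd by (intro Bochner_Integration.integrable_add integrable_mult_right) (auto simp: finite_measure.integrable_const[OF prob_space.finite_measure[OF P]])
  show "G \<in> borel_measurable P" by measurable
  show "AE x in P. norm (G x) \<le> norm ((4/\<delta>)^2 * Aof x powr (\<alpha> + \<delta>) + (4/\<alpha>)^2)"
    using AE01
  proof eventually_elim
    case (elim x)
    have "G x = exp (\<alpha> * ln (Aof x)) * (ln (Aof x))^2 * exp (c * \<bar>ln (Aof x)\<bar>)"
      using elim by (simp add: G_def Aof_powr)
    also have "\<dots> \<le> (4/\<delta>)^2 * exp ((\<alpha> + \<delta>) * ln (Aof x)) + (4/\<alpha>)^2"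
      using a1 d0 c_props by (intro G_bound) auto
    also have "\<dots> = (4/\<delta>)^2 * Aof x powr (\<alpha> + \<delta>) + (4/\<alpha>)^2"
      using elim by (simp add: Aof_powr)
    finally have "G x \<le> (4/\<delta>)^2 * Aof x powr (\<alpha> + \<delta>) + (4/\<alpha>)^2" .
    moreover have "G x \<ge> 0" by (simp add: G_def)
    ultimately show ?case by simp
  qed
qed

lemma int_f1: "integrable P (\<lambda>x. Aof x powr \<alpha> * ln (Aof x))"
proof (rule Bochner_Integration.integrable_bound)
  show "integrable P (\<lambda>x. Aof x powr \<alpha> + G x)"
    using int_f0 int_G by (rule Bochner_Integration.integrable_add)
  show "(\<lambda>x. Aof x powr \<alpha> * ln (Aof x)) \<in> borel_measurable P" by measurable
  show "AE x in P. norm (Aof x powr \<alpha> * ln (Aof x)) \<le> norm (Aof x powr \<alpha> + G x)"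
  proof (rule AE_I2)
    fix x
    define L where "L = ln (Aof x)"
    have p0: "Aof x powr \<alpha> \<ge> 0" by simp
    have "0 \<le> (\<bar>L\<bar> - 1)^2" by simp
    hence "2 * \<bar>L\<bar> \<le> 1 + L^2" by (simp add: power2_eq_square algebra_simps abs_mult_self_eq)
    hence "\<bar>L\<bar> \<le> 1 + L^2" using zero_le_power2[of L] by linarith
    also have "\<dots> \<le> 1 + L^2 * exp (c * \<bar>L\<bar>)"
      using c_props by (simp add: mult_le_cancel_left1 )
    finally have "Aof x powr \<alpha> * \<bar>L\<bar> \<le> Aof x powr \<alpha> * (1 + L^2 * exp (c * \<bar>L\<bar>))"
      using p0 by (intro mult_left_mono) auto
    moreover have "G x \<ge> 0" by (simp add: G_def)
    ultimately show "norm (Aof x powr \<alpha> * ln (Aof x)) \<le> norm (Aof x powr \<alpha> + G x)"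
      by (simp add: G_def L_def abs_mult algebra_simps)
  qed
qed

lemma int_f0_eq: "integral\<^sup>L P (\<lambda>x. Aof x powr \<alpha>) = 1"
proof -
  have "ennreal (integral\<^sup>L P (\<lambda>x. Aof x powr \<alpha>)) = 1"
    using nn_integral_eq_integral[OF int_f0] mA by simp
  thus ?thesis
    by (metis ennreal_1 ennreal_inj integral_nonneg_AE powr_ge_zero AE_I2 zero_le_one)
qed

lemma mom1: "(\<integral>\<^sup>+x. ennreal (Ap x) \<partial>P) \<le> 1"
proof -
  have "(\<integral>\<^sup>+x. ennreal (Ap x) \<partial>P) \<le> (\<integral>\<^sup>+x. ennreal (Aof x powr \<alpha> / \<alpha> + (\<alpha> - 1) / \<alpha>) \<partial>P)"
  proof (rule nn_integral_mono_AE)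
    show "AE x in P. ennreal (Ap x) \<le> ennreal (Aof x powr \<alpha> / \<alpha> + (\<alpha> - 1) / \<alpha>)"
      using AE01
    proof eventually_elim
      case (elim x)
      have "Ap x = exp (ln (Aof x))" using elim Aof_pos[of x] by (simp add: Ap_eq)
      also have "\<dots> \<le> exp (\<alpha> * ln (Aof x)) / \<alpha> + (\<alpha> - 1) / \<alpha>"
        using a1 by (intro exp_young) auto
      also have "\<dots> = Aof x powr \<alpha> / \<alpha> + (\<alpha> - 1) / \<alpha>" using elim by (simp add: Aof_powr)
      finally show ?case by (rule ennreal_leI)
    qed
  qed
  also have "\<dots> = ennreal (integral\<^sup>L P (\<lambda>x. Aof x powr \<alpha> / \<alpha> + (\<alpha> - 1) / \<alpha>))"
  proof (rule nn_integral_eq_integral)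
    show "integrable P (\<lambda>x. Aof x powr \<alpha> / \<alpha> + (\<alpha> - 1) / \<alpha>)"
      using int_f0 by (intro Bochner_Integration.integrable_add integrable_divide)
        (auto simp: finite_measure.integrable_const[OF prob_space.finite_measure[OF P]])
    show "AE x in P. 0 \<le> Aof x powr \<alpha> / \<alpha> + (\<alpha> - 1) / \<alpha>"
      using a1 by (intro AE_I2) simp
  qed
  also have "integral\<^sup>L P (\<lambda>x. Aof x powr \<alpha> / \<alpha> + (\<alpha> - 1) / \<alpha>) = 1"
  proof -
    have "integral\<^sup>L P (\<lambda>x. Aof x powr \<alpha> / \<alpha> + (\<alpha> - 1) / \<alpha>)
        = integral\<^sup>L P (\<lambda>x. Aof x powr \<alpha>) / \<alpha> + (\<alpha> - 1) / \<alpha>"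
      using int_f0 P
      by (subst Bochner_Integration.integral_add) (auto simp: prob_space.prob_space finite_measure.integrable_const[OF prob_space.finite_measure[OF P]])
    thus ?thesis using int_f0_eq a1 by (simp add: field_simps)
  qed
  finally show ?thesis by simp
qed

lemma mom2:
  assumes e: "0 \<le> \<epsilon>" "\<epsilon> \<le> c"
  shows "(\<integral>\<^sup>+x. ennreal (Ap x powr (\<alpha> + \<epsilon>)) \<partial>P) \<le> ennreal (1 + \<epsilon> * rho0 P \<alpha> + \<epsilon>^2 * integral\<^sup>L P G)"
proof -
  define f where "f x = Aof x powr \<alpha> + \<epsilon> * (Aof x powr \<alpha> * ln (Aof x)) + \<epsilon>^2 * G x" for x
  have intf: "integrable P f" unfolding f_def
    using int_f0 int_f1 int_G by (intro Bochner_Integration.integrable_add integrable_mult_right) auto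
  have ptw: "AE x in P. Ap x powr (\<alpha> + \<epsilon>) \<le> f x"
    using AE01
  proof eventually_elim
    case (elim x)
    have "Ap x powr (\<alpha> + \<epsilon>) = exp ((\<alpha> + \<epsilon>) * ln (Aof x))" using elim by (simp add: Ap_eq Aof_powr)
    also have "\<dots> \<le> f x" unfolding f_def G_def using elim e
      by (simp add: Aof_powr taylor_bound)
    finally show ?case .
  qed
  have "(\<integral>\<^sup>+x. ennreal (Ap x powr (\<alpha> + \<epsilon>)) \<partial>P) \<le> (\<integral>\<^sup>+x. ennreal (f x) \<partial>P)"
    using ptw by (intro nn_integral_mono_AE) (auto elim!: eventually_mono intro: ennreal_leI)
  also have "\<dots> = ennreal (integral\<^sup>L P f)"
  proof (rule nn_integral_eq_integral[OF intf])
    show "AE x in P. 0 \<le> f x" using ptw by eventually_elim (meson powr_ge_zero order_trans)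
  qed
  also have "integral\<^sup>L P f = 1 + \<epsilon> * rho0 P \<alpha> + \<epsilon>^2 * integral\<^sup>L P G"
    unfolding f_def rho0_def
    using int_f0 int_f1 int_G int_f0_eq
    by (simp add: Bochner_Integration.integral_add integrable_mult_right)
  finally show ?thesis .
qed

lemma mom2_ex: "\<exists>K\<ge>0. \<forall>\<epsilon>. 0 \<le> \<epsilon> \<and> \<epsilon> \<le> c \<longrightarrow>
   (\<integral>\<^sup>+x. ennreal (Ap x powr (\<alpha> + \<epsilon>)) \<partial>P) \<le> ennreal (1 + \<epsilon> * rho0 P \<alpha> + \<epsilon>^2 * K)"
proof (intro exI[of _ "max 0 (integral\<^sup>L P G)"] conjI allI impI)
  fix \<epsilon> :: real assume e: "0 \<le> \<epsilon> \<and> \<epsilon> \<le> c"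
  have "(\<integral>\<^sup>+x. ennreal (Ap x powr (\<alpha> + \<epsilon>)) \<partial>P) \<le> ennreal (1 + \<epsilon> * rho0 P \<alpha> + \<epsilon>^2 * integral\<^sup>L P G)"
    using e by (intro mom2) auto
  also have "\<dots> \<le> ennreal (1 + \<epsilon> * rho0 P \<alpha> + \<epsilon>^2 * max 0 (integral\<^sup>L P G))"
    by (intro ennreal_leI add_left_mono mult_left_mono) auto
  finally show "(\<integral>\<^sup>+x. ennreal (Ap x powr (\<alpha> + \<epsilon>)) \<partial>P) \<le> ennreal (1 + \<epsilon> * rho0 P \<alpha> + \<epsilon>^2 * max 0 (integral\<^sup>L P G))" .
qed simp

end


lemma final_ineq:
  fixes L \<epsilon> \<rho> K \<alpha> \<sigma> :: real and n :: nat
  assumes L: "L > 0" and eps: "\<epsilon> = L powr (-1/2)" "\<epsilon> \<le> 1"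
    and r: "\<rho> > 0" and K: "K \<ge> 0" and a: "\<alpha> > 1" and s: "\<sigma> > 0"
    and n: "n \<ge> 1" and nL: "real n \<le> L / \<rho> - L powr (1/2 + \<sigma>) + 1"
    and big: "fact (nat \<lceil>\<alpha>\<rceil> + 1) * 4 powr (\<alpha> + 1) * exp (2 * \<rho> + K / \<rho> + 2 * K)
               * (L / \<rho> + 3) powr (5 + 3 * \<alpha>) \<le> exp (\<rho> / 2 * L powr \<sigma>)"
  shows "fact (nat \<lceil>\<alpha> + \<epsilon>\<rceil>) * 4 powr (\<alpha> + \<epsilon>) * (real n * real (n+1)) powr (1 + (\<alpha> + \<epsilon>))
            * real (n+2) powr (\<alpha> + \<epsilon>) * (1 + \<epsilon> * \<rho> + \<epsilon>^2 * K) ^ (n+1) / exp L powr (\<alpha> + \<epsilon>)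
         \<le> exp (- (\<rho> / 2) * L powr \<sigma>) * exp L powr (- \<alpha>)"
proof -
  define \<beta> where "\<beta> = \<alpha> + \<epsilon>"
  have e0: "\<epsilon> > 0" using eps L by simp
  have b1: "\<beta> \<ge> 1" "\<beta> \<le> \<alpha> + 1" unfolding \<beta>_def using a e0 eps(2) by linarith+
  define F0 where "F0 = (fact (nat \<lceil>\<alpha>\<rceil> + 1) :: real)"
  have F00: "F0 \<ge> 0" by (simp add: F0_def)
  define D where "D = 5 + 3 * \<alpha>"
  define c1 where "c1 = 2 * \<rho> + K / \<rho> + 2 * K"
  define Pw where "Pw = L powr (1/2 + \<sigma>)"
  have Pw0: "Pw \<ge> 0" by (simp add: Pw_def)
  have s1: "fact (nat \<lceil>\<beta>\<rceil>) \<le> F0"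
  proof -
    have "\<lceil>\<beta>\<rceil> \<le> \<lceil>\<alpha> + 1\<rceil>" using b1 by (intro ceiling_mono) auto
    hence c: "\<lceil>\<beta>\<rceil> \<le> \<lceil>\<alpha>\<rceil> + 1" by simp
    have c0: "0 \<le> \<lceil>\<alpha>\<rceil>" using a by simp
    have "nat \<lceil>\<beta>\<rceil> \<le> nat (\<lceil>\<alpha>\<rceil> + 1)" using nat_mono[OF c] .
    also have "\<dots> = nat \<lceil>\<alpha>\<rceil> + 1" using c0 by (simp add: nat_add_distrib)
    finally have "nat \<lceil>\<beta>\<rceil> \<le> nat \<lceil>\<alpha>\<rceil> + 1" .
    thus ?thesis unfolding F0_def by (intro fact_mono) 
  qed
  have s2: "4 powr \<beta> \<le> 4 powr (\<alpha> + 1)" using b1 by (intro powr_mono) auto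
  have n2: "real (n+2) \<ge> 1" by simp
  have s3: "(real n * real (n+1)) powr (1 + \<beta>) * real (n+2) powr \<beta> \<le> real (n+2) powr D"
  proof -
    have "real n * real (n+1) \<le> real (n+2) ^ 2" unfolding power2_eq_square by (intro mult_mono) auto
    hence "(real n * real (n+1)) powr (1 + \<beta>) \<le> (real (n+2) ^ 2) powr (1 + \<beta>)"
      using b1 by (intro powr_mono2) auto
    also have "\<dots> = real (n+2) powr (2 * (1 + \<beta>))"
    proof -
      have "real (n+2) ^ 2 = real (n+2) powr 2" by (subst powr_numeral) auto
      thus ?thesis by (simp only: powr_powr)
    qed
    finally have "(real n * real (n+1)) powr (1 + \<beta>) * real (n+2) powr \<beta>
        \<le> real (n+2) powr (2 * (1 + \<beta>)) * real (n+2) powr \<beta>"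
      by (intro mult_right_mono) auto
    also have "\<dots> = real (n+2) powr (2 + 3 * \<beta>)" by (simp add: powr_add[symmetric] algebra_simps)
    also have "\<dots> \<le> real (n+2) powr D" using b1 n2 by (intro powr_mono) (auto simp: D_def)
    finally show ?thesis .
  qed
  have s4: "real (n+2) powr D \<le> (L / \<rho> + 3) powr D"
  proof -
    have "L powr (1/2 + \<sigma>) \<ge> 0" by simp
    hence "real n + 2 \<le> L / \<rho> + 3" using nL by linarith
    hence "real (n+2) \<le> L / \<rho> + 3" by simp
    thus ?thesis using a by (intro powr_mono2) (auto simp: D_def)
  qed
  define t where "t = \<epsilon> * \<rho> + \<epsilon>^2 * K"
  have t0: "t \<ge> 0" using e0 r K by (simp add: t_def)
  have s5: "(1 + t) ^ (n+1) \<le> exp (real (n+1) * t)"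
  proof -
    have "(1 + t) ^ (n+1) \<le> exp t ^ (n+1)" using t0 by (intro power_mono) (auto simp: exp_ge_add_one_self add.commute)
    also have "\<dots> = exp (real (n+1) * t)" by (rule exp_of_nat_mult[symmetric])
    finally show ?thesis .
  qed
  have epw: "\<epsilon> * Pw = L powr \<sigma>"
    using L by (simp add: eps Pw_def powr_add[symmetric])
  have e2L: "\<epsilon>^2 * L = 1"
    using L by (simp add: eps power2_eq_square powr_add[symmetric] powr_minus_divide)
  have e2: "\<epsilon>^2 \<le> 1" using e0 eps by (simp add: power_le_one)
  have s6: "real (n+1) * t \<le> \<epsilon> * L - \<rho> * L powr \<sigma> + c1"
  proof -
    have "real (n+1) * t \<le> (L / \<rho> - Pw + 2) * t" using nL t0 by (intro mult_right_mono) (auto simp: Pw_def)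
    also have "\<dots> = \<epsilon> * L - \<rho> * (\<epsilon> * Pw) + 2 * \<epsilon> * \<rho> + K / \<rho> * (\<epsilon>^2 * L) - \<epsilon>^2 * K * Pw + 2 * \<epsilon>^2 * K"
      using r by (simp add: t_def field_simps)
    also have "\<dots> \<le> \<epsilon> * L - \<rho> * L powr \<sigma> + c1"
    proof -
      have "2 * \<epsilon> * \<rho> \<le> 2 * \<rho>" using eps r by simp
      moreover have "2 * \<epsilon>^2 * K \<le> 2 * K" using e2 K by (simp add: mult_left_le_one_le)
      moreover have "\<epsilon>^2 * K * Pw \<ge> 0" using K Pw0 by simp
      ultimately show ?thesis unfolding epw e2L c1_def by simp
    qed
    finally show ?thesis .
  qed
  have xb: "exp L powr \<beta> = exp (\<beta> * L)" by (simp add: powr_def)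
  have xa: "exp L powr (- \<alpha>) = exp (- \<alpha> * L)" by (simp add: powr_def)
  have lhs_pos: "(real n * real (n+1)) powr (1 + \<beta>) * real (n+2) powr \<beta> \<ge> 0" by simp
  have "fact (nat \<lceil>\<beta>\<rceil>) * 4 powr \<beta> * (real n * real (n+1)) powr (1 + \<beta>) * real (n+2) powr \<beta>
          * (1 + t) ^ (n+1) / exp L powr \<beta>
      = fact (nat \<lceil>\<beta>\<rceil>) * 4 powr \<beta> * ((real n * real (n+1)) powr (1 + \<beta>) * real (n+2) powr \<beta>)
          * (1 + t) ^ (n+1) * exp (- (\<beta> * L))"
    by (simp add: xb exp_minus field_simps)
  also have "\<dots> \<le> F0 * 4 powr (\<alpha> + 1) * (L / \<rho> + 3) powr D * exp (real (n+1) * t) * exp (- (\<beta> * L))"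
    using s1 s2 s3 s4 s5 t0 lhs_pos F00
    by (intro mult_right_mono mult_mono order_trans[OF s3 s4]) auto
  also have "\<dots> \<le> F0 * 4 powr (\<alpha> + 1) * (L / \<rho> + 3) powr D * exp (\<epsilon> * L - \<rho> * L powr \<sigma> + c1) * exp (- (\<beta> * L))"
    using s6 F00 by (intro mult_right_mono mult_left_mono) auto
  also have "\<dots> = (F0 * 4 powr (\<alpha> + 1) * exp c1 * (L / \<rho> + 3) powr D) * exp (- \<rho> * L powr \<sigma>) * exp (- \<alpha> * L)"
  proof -
    have eq: "exp (\<epsilon> * L - \<rho> * L powr \<sigma> + c1) * exp (- (\<beta> * L)) = exp c1 * exp (- \<rho> * L powr \<sigma>) * exp (- \<alpha> * L)"
      by (simp add: \<beta>_def exp_add[symmetric] algebra_simps)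
    have "F0 * 4 powr (\<alpha> + 1) * (L / \<rho> + 3) powr D * exp (\<epsilon> * L - \<rho> * L powr \<sigma> + c1) * exp (- (\<beta> * L))
       = (F0 * 4 powr (\<alpha> + 1) * (L / \<rho> + 3) powr D) * (exp (\<epsilon> * L - \<rho> * L powr \<sigma> + c1) * exp (- (\<beta> * L)))"
      by (simp only: mult.assoc)
    also have "\<dots> = (F0 * 4 powr (\<alpha> + 1) * (L / \<rho> + 3) powr D) * (exp c1 * exp (- \<rho> * L powr \<sigma>) * exp (- \<alpha> * L))"
      by (simp only: eq)
    also have "\<dots> = (F0 * 4 powr (\<alpha> + 1) * exp c1 * (L / \<rho> + 3) powr D) * exp (- \<rho> * L powr \<sigma>) * exp (- \<alpha> * L)"
      by (simp only: mult_ac)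
    finally show ?thesis .
  qed
  also have "\<dots> \<le> exp (\<rho> / 2 * L powr \<sigma>) * exp (- \<rho> * L powr \<sigma>) * exp (- \<alpha> * L)"
    using big by (intro mult_right_mono) (auto simp: F0_def c1_def D_def)
  also have "\<dots> = exp (- (\<rho> / 2) * L powr \<sigma>) * exp L powr (- \<alpha>)"
    by (simp add: xa exp_add[symmetric])
  finally show ?thesis by (simp add: \<beta>_def t_def add.assoc)
qed


lemma asym1:
  fixes r s D F :: real
  assumes "r > 0" "s > 0" "D > 0" "F > 0"
  shows "eventually (\<lambda>x. F * (ln x / r + 3) powr D \<le> exp (r/2 * ln x powr s)) at_top"
proof -
  have "eventually (\<lambda>L. F * (L / r + 3) powr D \<le> exp (r/2 * L powr s)) at_top"
    using assms by real_asymp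
  from eventually_compose_filterlim[OF this ln_at_top] show ?thesis .
qed

lemma asym2:
  fixes m :: real
  assumes "m > 0"
  shows "eventually (\<lambda>x. ln x powr (-1/2) \<le> m) at_top"
proof -
  have "eventually (\<lambda>L. L powr (-1/2) \<le> m) at_top"
    using assms by real_asymp
  from eventually_compose_filterlim[OF this ln_at_top] show ?thesis .
qed

lemma tail_zero:
  assumes "x > 0"
  shows "annealed_tail P 0 0 x = 0"
  using assms by (simp add: annealed_tail_def)


lemma n1_le:
  fixes L \<rho> \<sigma> :: real
  shows "real_of_int (\<lfloor>L / \<rho>\<rfloor> - \<lfloor>L powr (1/2 + \<sigma>)\<rfloor>) \<le> L / \<rho> - L powr (1/2 + \<sigma>) + 1"
  by (smt (verit) of_int_diff of_int_floor_le real_of_int_floor_gt_diff_one)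

theorem lemma4p3:
  fixes P :: "real measure" and \<alpha> :: real
  assumes "prob_space P" and "sets P = sets borel"
    and "measure P {0<..<1} = 1"
    and "\<alpha> > 1"
    and "(\<integral>\<^sup>+ w. ennreal (Aof w powr \<alpha>) \<partial>P) = 1"
    and "measure P {w. Aof w = 1} < 1"
    and "\<exists>\<delta>>0. (\<integral>\<^sup>+ w. ennreal (Aof w powr (\<alpha> + \<delta>)) \<partial>P) < \<infinity>"
    and "\<not> (\<exists>h>0. AE w in P. ln (Aof w) \<in> {h * of_int k | k. True})"
  shows "\<exists>\<sigma>0>0. \<forall>\<sigma>. 0 < \<sigma> \<and> \<sigma> < \<sigma>0 \<longrightarrow>
           (\<exists>C>0. \<exists>\<delta>'>0. \<forall>\<^sub>F x in at_top.
              annealed_tail P (nat (n1 P \<alpha> \<sigma> x)) (nat (n1 P \<alpha> \<sigma> x)) x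
                \<le> exp (- C * ln x powr \<delta>') * x powr (- \<alpha>))"
proof -
  from assms(7) obtain \<delta> where d0: "\<delta> > 0"
    and mD: "(\<integral>\<^sup>+ w. ennreal (Aof w powr (\<alpha> + \<delta>)) \<partial>P) < \<infinity>" by blast
  define c where "c = min (\<delta>/2) (\<alpha>/2)"
  note hyps = assms(1) assms(2) assms(3) assms(4) assms(5) d0 mD c_def
  have c0: "c > 0" using d0 assms(4) by (simp add: c_def)
  obtain K where K0: "K \<ge> 0" and mom: "\<And>\<epsilon>. 0 \<le> \<epsilon> \<Longrightarrow> \<epsilon> \<le> c \<Longrightarrow>
      (\<integral>\<^sup>+x. ennreal (Ap x powr (\<alpha> + \<epsilon>)) \<partial>P) \<le> ennreal (1 + \<epsilon> * rho0 P \<alpha> + \<epsilon>^2 * K)"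
    using mom2_ex[OF hyps] by blast
  have m1: "(\<integral>\<^sup>+x. ennreal (Ap x) \<partial>P) \<le> 1" using mom1[OF hyps] .
  show ?thesis
  proof (rule exI[of _ 1], intro conjI allI impI)
    show "(0::real) < 1" by simp
    fix \<sigma> :: real assume \<sigma>: "0 < \<sigma> \<and> \<sigma> < 1"
    define \<rho> where "\<rho> = rho0 P \<alpha>"
    show "\<exists>C>0. \<exists>\<delta>'>0. \<forall>\<^sub>F x in at_top.
              annealed_tail P (nat (n1 P \<alpha> \<sigma> x)) (nat (n1 P \<alpha> \<sigma> x)) x
                \<le> exp (- C * ln x powr \<delta>') * x powr (- \<alpha>)"
    proof (cases "\<rho> > 0")
      case False
      have ev: "\<forall>\<^sub>F x in at_top. x > (1::real)" by (rule eventually_gt_at_top)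
      show ?thesis
      proof (intro exI[of _ 1] conjI)
        show "\<forall>\<^sub>F x in at_top. annealed_tail P (nat (n1 P \<alpha> \<sigma> x)) (nat (n1 P \<alpha> \<sigma> x)) x
                \<le> exp (- 1 * ln x powr 1) * x powr (- \<alpha>)"
          using ev
        proof eventually_elim
          case (elim x)
          have L0: "ln x > 0" using elim by simp
          have "ln x / \<rho> \<le> 0" using False L0 by (simp add: divide_nonneg_nonpos)
          hence f1: "\<lfloor>ln x / \<rho>\<rfloor> \<le> 0" by linarith
          have f2: "\<lfloor>ln x powr (1/2 + \<sigma>)\<rfloor> \<ge> 0" by simp
          have "n1 P \<alpha> \<sigma> x = \<lfloor>ln x / \<rho>\<rfloor> - \<lfloor>ln x powr (1/2 + \<sigma>)\<rfloor>"
            by (simp add: n1_def \<rho>_def)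
          hence "n1 P \<alpha> \<sigma> x \<le> 0" using f1 f2 by linarith
          hence "nat (n1 P \<alpha> \<sigma> x) = 0" by simp
          hence "annealed_tail P (nat (n1 P \<alpha> \<sigma> x)) (nat (n1 P \<alpha> \<sigma> x)) x = 0"
            using elim by (simp add: tail_zero)
          thus ?case by simp
        qed
      qed simp_all
    next
      case True
      define m where "m = min c 1"
      have m0: "m > 0" using c0 by (simp add: m_def)
      define F where "F = fact (nat \<lceil>\<alpha>\<rceil> + 1) * 4 powr (\<alpha> + 1) * exp (2 * \<rho> + K / \<rho> + 2 * K)"
      have F0: "F > 0" by (simp add: F_def)
      define D where "D = 5 + 3 * \<alpha>"
      have D0: "D > 0" using assms(4) by (simp add: D_def)
      have ev1: "\<forall>\<^sub>F x in at_top. x > (1::real)" by (rule eventually_gt_at_top)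
      have ev2: "\<forall>\<^sub>F x in at_top. ln x powr (-1/2) \<le> m" by (rule asym2[OF m0])
      have ev3: "\<forall>\<^sub>F x in at_top. F * (ln x / \<rho> + 3) powr D \<le> exp (\<rho>/2 * ln x powr \<sigma>)"
        using True \<sigma> D0 F0 by (intro asym1) auto
      have evf: "\<forall>\<^sub>F x in at_top. annealed_tail P (nat (n1 P \<alpha> \<sigma> x)) (nat (n1 P \<alpha> \<sigma> x)) x
                \<le> exp (- (\<rho>/2) * ln x powr \<sigma>) * x powr (- \<alpha>)"
          using ev1 ev2 ev3
        proof eventually_elim
          case (elim x)
          define L where "L = ln x"
          have L0: "L > 0" using elim by (simp add: L_def)
          have xL: "x = exp L" using elim by (simp add: L_def)
          define \<epsilon> where "\<epsilon> = L powr (-1/2)"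
          have e0: "\<epsilon> > 0" using L0 by (simp add: \<epsilon>_def)
          have ec: "\<epsilon> \<le> c" "\<epsilon> \<le> 1" using elim(2) by (auto simp: \<epsilon>_def L_def m_def)
          define N where "N = n1 P \<alpha> \<sigma> x"
          have rhs0: "0 \<le> exp (- (\<rho>/2) * ln x powr \<sigma>) * x powr (- \<alpha>)" by simp
          show ?case
          proof (cases "N \<le> 0")
            case True
            hence "nat (n1 P \<alpha> \<sigma> x) = 0" by (simp add: N_def)
            thus ?thesis using elim rhs0 by (simp add: tail_zero)
          next
            case False
            define n where "n = nat N"
            have n: "n \<ge> 1" using False by (simp add: n_def)
            have rn: "real n = real_of_int N" using False by (simp add: n_def)
            have nL: "real n \<le> L / \<rho> - L powr (1/2 + \<sigma>) + 1"
              unfolding rn N_def n1_def \<rho>_def[symmetric] L_def[symmetric] by (rule n1_le)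
            define M where "M = 1 + \<epsilon> * \<rho> + \<epsilon>^2 * K"
            have M1: "M \<ge> 1" using e0 True K0 by (simp add: M_def)
            have b1: "\<alpha> + \<epsilon> \<ge> 1" using assms(4) e0 by simp
            have mA': "(\<integral>\<^sup>+x. ennreal (Ap x) \<partial>P) \<le> ennreal M"
            proof -
              have "(1::ennreal) \<le> ennreal M" using ennreal_leI[OF M1] by simp
              thus ?thesis using m1 by (rule order_trans[rotated])
            qed
            have mB: "(\<integral>\<^sup>+x. ennreal (Ap x powr (\<alpha> + \<epsilon>)) \<partial>P) \<le> ennreal M"
              using mom[of \<epsilon>] e0 ec by (simp add: M_def \<rho>_def)
            have "annealed_tail P n n x \<le> fact (nat \<lceil>\<alpha> + \<epsilon>\<rceil>) * 4 powr (\<alpha> + \<epsilon>) * (real n * real (n+1)) powr (1 + (\<alpha> + \<epsilon>))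
                * real (n+2) powr (\<alpha> + \<epsilon>) * M ^ (n+1) / x powr (\<alpha> + \<epsilon>)"
              using elim by (intro annealed_bound[OF assms(1) assms(2) b1 M1 mA' mB n]) auto
            also have "\<dots> \<le> exp (- (\<rho> / 2) * L powr \<sigma>) * exp L powr (- \<alpha>)"
              unfolding xL M_def
            proof (rule final_ineq[OF L0 \<epsilon>_def ec(2) True K0 assms(4) _ n nL])
              show "\<sigma> > 0" using \<sigma> by simp
              show "fact (nat \<lceil>\<alpha>\<rceil> + 1) * 4 powr (\<alpha> + 1) * exp (2 * \<rho> + K / \<rho> + 2 * K)
                     * (L / \<rho> + 3) powr (5 + 3 * \<alpha>) \<le> exp (\<rho> / 2 * L powr \<sigma>)"
                using elim(3) by (simp add: F_def D_def L_def)
            qed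
            finally show ?thesis using elim(1) by (simp add: n_def N_def L_def)
          qed
        qed
      show ?thesis
        apply (rule exI[of _ "\<rho>/2"], rule conjI)
        using True apply simp
        apply (rule exI[of _ \<sigma>], rule conjI)
        using \<sigma> apply simp
        by (rule evf)
    qed
  qed
qed

end
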